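(* Let $f_j:[x_i,\infty)\to\mathbb{R}^+$, $j=1,2,3$, be probability density functions with $$f_1(x)\sim C_1e^{-x},\qquad f_2(x)\sim C_2e^{-\xi x},\qquad f_3(x)\sim C_3x^{-\eta}\qquad(x\to\infty),$$ for some $\eta>1$, $\xi\in(0,1)$ and $C_j>0$. Then each $\mathcal{U}_2[f_j]$ has unbounded support, and: (1) $\mathcal{U}_2[f_1]$ decays exponentially, and consequently $\sigma_p[\mathcal{U}_2[f_1]]<\infty$ for every $p>0$; (2) $\mathcal{U}_2[f_2]$ decays as $[(1-\xi)|u|+k]^{\frac1{\xi-1}}$ (for some constant $k$), and $\sigma_p[\mathcal{U}_2[f_2]]<\infty$ for every $p\in\left(0,\frac{\xi}{1-\xi}\right)$; (3) $\mathcal{U}_2[f_3]$ has no finite moments: $\sigma_p[\mathcal{U}_2[f_3]]=\infty$ for every $p>0$.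
   Context: Up transform with parameter $2$: for a probability density $f$ on $[x_i,\infty)$, $\mathcal{U}_2[f](u)=e^{-x(u)}$, where $x(u)$ is the inverse of $u(x)=-\int_{x_i}^x e^{v}f(v)\,dv$ (so $u'(x)=-e^{x}f(x)$; defined up to an additive constant). For a density $h$, $\sigma_p[h]=\left(\int|u|^ph(u)\,du\right)^{1/p}$. *)

theory Defs
  imports "HOL-Analysis.Analysis" "HOL-Library.Landau_Symbols"
begin

definition up_u :: "real \<Rightarrow> (real \<Rightarrow> real) \<Rightarrow> real \<Rightarrow> real" where
  "up_u xi f x = - integral {xi..x} (\<lambda>v. exp v * f v)"

text \<open>Up transform with parameter 2: U_2[f](u) = exp(-x(u)) on the range of u,
  where x(u) is the inverse of u on [x_i, infinity); zero outside that range.\<close>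
definition up2 :: "real \<Rightarrow> (real \<Rightarrow> real) \<Rightarrow> real \<Rightarrow> real" where
  "up2 xi f u = (if u \<in> up_u xi f ` {xi..}
                 then exp (- the_inv_into {xi..} (up_u xi f) u) else 0)"

definition sigma :: "real \<Rightarrow> (real \<Rightarrow> real) \<Rightarrow> ennreal" where
  "sigma p h = (let I = (\<integral>\<^sup>+ u. ennreal (\<bar>u\<bar> powr p * h u) \<partial>lborel)
                in if I = \<infinity> then \<infinity> else ennreal ((enn2real I) powr (1 / p)))"

end

theory Submission
  imports Defs "HOL-Real_Asymp.Real_Asymp"
begin


lemma nn_mirror:
  fixes \<phi> :: "real \<Rightarrow> ennreal"
  assumes [measurable]: "\<phi> \<in> borel_measurable borel"
  shows "(\<integral>\<^sup>+u. \<phi> (- u) \<partial>lborel) = (\<integral>\<^sup>+u. \<phi> u \<partial>lborel)"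
proof -
  have "(\<integral>\<^sup>+u. \<phi> u \<partial>lborel) = (\<integral>\<^sup>+u. \<phi> u \<partial>(distr lborel borel uminus))"
    by (simp only: lborel_distr_uminus)
  also have "\<dots> = (\<integral>\<^sup>+u. \<phi> (- u) \<partial>lborel)"
    by (subst nn_integral_distr) auto
  finally show ?thesis by simp
qed

lemma sigma_finite:
  assumes "(\<integral>\<^sup>+u. ennreal (\<bar>u\<bar> powr p * h u) \<partial>lborel) < \<infinity>"
  shows "sigma p h < \<infinity>"
  using assms by (simp add: sigma_def Let_def)

lemma sigma_infinite:
  assumes "(\<integral>\<^sup>+u. ennreal (\<bar>u\<bar> powr p * h u) \<partial>lborel) = \<infinity>"
  shows "sigma p h = \<infinity>"
  using assms by (simp add: sigma_def Let_def)

lemma moment_finite: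
  fixes h :: "real \<Rightarrow> real" and p R q K B :: real
  assumes h0: "\<And>u. 0 \<le> h u" and hpos: "\<And>u. u > 0 \<Longrightarrow> h u = 0" and hB: "\<And>u. h u \<le> B"
    and R: "R > 0" and q: "q > 1" and K: "K \<ge> 0" and p: "p > 0"
    and tail: "\<And>u. u \<le> - R \<Longrightarrow> \<bar>u\<bar> powr p * h u \<le> K * (- u) powr (- q)"
  shows "(\<integral>\<^sup>+u. ennreal (\<bar>u\<bar> powr p * h u) \<partial>lborel) < \<infinity>"
proof -
  have B0: "B \<ge> 0" using h0[of 0] hB[of 0] by linarith
  define \<phi> where "\<phi> u = ennreal (K * u powr (- q)) * indicator {R..} u" for u :: real
  have "(\<integral>\<^sup>+u. ennreal (\<bar>u\<bar> powr p * h u) \<partial>lborel)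
      \<le> (\<integral>\<^sup>+u. ennreal (R powr p * B) * indicator {-R..0} u + \<phi> (- u) \<partial>lborel)"
  proof (rule nn_integral_mono)
    fix u :: real
    show "ennreal (\<bar>u\<bar> powr p * h u) \<le> ennreal (R powr p * B) * indicator {-R..0} u + \<phi> (- u)"
    proof (cases "u > 0")
      case True thus ?thesis using hpos by simp
    next
      case False
      show ?thesis
      proof (cases "u \<le> - R")
        case True
        hence "ennreal (\<bar>u\<bar> powr p * h u) \<le> \<phi> (- u)"
          using tail[OF True] by (simp add: \<phi>_def indicator_def ennreal_leI)
        thus ?thesis by (simp add: add_increasing)
      next
        case F2: False
        have "\<bar>u\<bar> powr p \<le> R powr p" using False F2 p by (intro powr_mono2) auto
        hence "\<bar>u\<bar> powr p * h u \<le> R powr p * B" using h0[of u] hB[of u]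
          by (intro mult_mono) auto
        hence "ennreal (\<bar>u\<bar> powr p * h u) \<le> ennreal (R powr p * B) * indicator {-R..0} u"
          using False F2 by (simp add: indicator_def ennreal_leI)
        thus ?thesis by (simp add: add_increasing2)
      qed
    qed
  qed
  also have "\<dots> = (\<integral>\<^sup>+u. ennreal (R powr p * B) * indicator {-R..0} u \<partial>lborel) + (\<integral>\<^sup>+u. \<phi> (- u) \<partial>lborel)"
    by (rule nn_integral_add) (auto simp: \<phi>_def)
  also have "(\<integral>\<^sup>+u. \<phi> (- u) \<partial>lborel) = (\<integral>\<^sup>+u. \<phi> u \<partial>lborel)"
    by (rule nn_mirror) (simp add: \<phi>_def)
  also have "(\<integral>\<^sup>+u. \<phi> u \<partial>lborel) = ennreal (K * (- (R powr (- q + 1)) / (- q + 1)))"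
  proof -
    have "((\<lambda>x. x powr (- q)) has_integral - (R powr (- q + 1)) / (- q + 1)) {R..}"
      using has_integral_powr_to_inf[of "- q" R] q R by simp
    hence "((\<lambda>x. K * x powr (- q)) has_integral K * (- (R powr (- q + 1)) / (- q + 1))) {R..}"
      by (rule has_integral_mult_right)
    from nn_integral_has_integral_lebesgue'[OF _ this] show ?thesis
      using K R by (simp add: \<phi>_def)
  qed
  also have "(\<integral>\<^sup>+u. ennreal (R powr p * B) * indicator {-R..0} u \<partial>lborel) = ennreal (R powr p * B) * ennreal R"
    using R by (simp add: nn_integral_cmult_indicator)
  finally have le: "(\<integral>\<^sup>+u. ennreal (\<bar>u\<bar> powr p * h u) \<partial>lborel) \<le> ennreal (R powr p * B) * ennreal R + ennreal (K * (- (R powr (- q + 1)) / (- q + 1)))" .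
  have "ennreal (R powr p * B) * ennreal R + ennreal (K * (- (R powr (- q + 1)) / (- q + 1))) < \<infinity>"
    by (simp add: ennreal_mult_less_top)
  with le show ?thesis by (rule le_less_trans)
qed

lemma moment_infinite:
  fixes h :: "real \<Rightarrow> real" and p R :: real
  assumes R: "R > 0" and tail: "\<And>u. u \<le> - R \<Longrightarrow> \<bar>u\<bar> powr p * h u \<ge> 1 / (- u)"
  shows "(\<integral>\<^sup>+u. ennreal (\<bar>u\<bar> powr p * h u) \<partial>lborel) = \<infinity>"
proof (rule ccontr)
  let ?I = "(\<integral>\<^sup>+u. ennreal (\<bar>u\<bar> powr p * h u) \<partial>lborel)"
  assume "?I \<noteq> \<infinity>"
  then obtain r where r: "?I = ennreal r" "r \<ge> 0" using ennreal_cases[of ?I] by auto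
  define T where "T = exp (r + ln R + 1)"
  have T: "T > R"
  proof -
    have "exp (ln R) < exp (r + ln R + 1)" using r(2) by simp
    thus ?thesis using R by (simp add: T_def)
  qed
  define \<phi> where "\<phi> u = ennreal (1 / u) * indicator {R..T} u" for u :: real
  have "(\<integral>\<^sup>+u. \<phi> (- u) \<partial>lborel) \<le> ?I"
  proof (rule nn_integral_mono)
    fix u :: real
    show "\<phi> (- u) \<le> ennreal (\<bar>u\<bar> powr p * h u)"
      using tail[of u] by (auto simp: \<phi>_def indicator_def intro!: ennreal_leI)
  qed
  also have "(\<integral>\<^sup>+u. \<phi> (- u) \<partial>lborel) = (\<integral>\<^sup>+u. \<phi> u \<partial>lborel)"
    by (rule nn_mirror) (simp add: \<phi>_def)
  also have "(\<integral>\<^sup>+u. \<phi> u \<partial>lborel) = ennreal (ln T - ln R)"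
  proof -
    have "((\<lambda>x. 1 / x) has_integral (ln T - ln R)) {R..T}"
      using R T
      by (intro fundamental_theorem_of_calculus)
         (auto intro!: derivative_eq_intros simp flip: has_real_derivative_iff_has_vector_derivative)
    from nn_integral_has_integral_lebesgue'[OF _ this] show ?thesis
      using R by (simp add: \<phi>_def)
  qed
  finally have "ln T - ln R \<le> r" using r by (simp add: ennreal_le_iff)
  thus False using R by (simp add: T_def)
qed

lemma asym_eps:
  fixes f \<phi> :: "real \<Rightarrow> real"
  assumes fe: "f \<sim>[at_top] \<phi>" and pos: "eventually (\<lambda>x. \<phi> x > 0) at_top" and e: "\<epsilon> > 0"
  shows "eventually (\<lambda>x. \<bar>f x - \<phi> x\<bar> \<le> \<epsilon> * \<phi> x) at_top"
proof -
  have "((\<lambda>x. f x / \<phi> x) \<longlongrightarrow> 1) at_top"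
    using pos by (intro asymp_equivD_strong[OF fe]) (auto elim: eventually_mono)
  hence "eventually (\<lambda>x. dist (f x / \<phi> x) 1 < \<epsilon>) at_top" using e by (rule tendstoD)
  thus ?thesis using pos
  proof eventually_elim
    case (elim x)
    have "\<bar>f x - \<phi> x\<bar> = \<bar>f x / \<phi> x - 1\<bar> * \<phi> x"
      using elim(2) by (simp add: field_simps abs_mult)
    also have "\<dots> \<le> \<epsilon> * \<phi> x" using elim by (intro mult_right_mono) (auto simp: dist_real_def)
    finally show ?case .
  qed
qed

lemma exp_has_integral:
  fixes s c a b :: real
  assumes "s \<noteq> 0" "a \<le> b"
  shows "((\<lambda>v. c * exp (s * v)) has_integral (c / s * exp (s * b) - c / s * exp (s * a))) {a..b}"
  using assms
  by (intro fundamental_theorem_of_calculus)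
     (auto intro!: derivative_eq_intros simp flip: has_real_derivative_iff_has_vector_derivative)

lemma ev_exp_poly: assumes "a > 0" "p > 0"
  shows "eventually (\<lambda>t::real. t powr (p + 2) * exp (- a * t) \<le> 1) at_top"
  using assms by real_asymp

lemma exp_powr_real: "exp (y::real) powr e = exp (y * e)"
  by (simp add: powr_def)

lemma ev3a: assumes "(\<eta>::real) > 1" "C > 0"
  shows "eventually (\<lambda>x::real. 1 \<le> C / 2 * exp x * x powr (- \<eta>)) at_top"
  using assms by real_asymp

lemma ev3b: assumes "(\<eta>::real) > 1" "C > 0" "p > 0"
  shows "eventually (\<lambda>x::real. exp x \<le> (C / 2 * exp (x - 1) * x powr (- \<eta>)) powr (p + 1)) at_top"
  using assms by real_asymp

locale updens =
  fixes xi :: real and f :: "real \<Rightarrow> real"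
  assumes pos: "\<And>x. x \<ge> xi \<Longrightarrow> f x > 0"
      and dens: "(f has_integral 1) {xi..}"
begin

definition g :: "real \<Rightarrow> real" where "g v = exp v * f v"
definition F :: "real \<Rightarrow> real" where "F x = integral {xi..x} g"

lemma g_pos: "v \<ge> xi \<Longrightarrow> g v > 0"
  using pos by (simp add: g_def)

lemma g_absint: assumes "xi \<le> a" shows "g absolutely_integrable_on {a..b}"
proof -
  have fi: "f integrable_on {a..b}"
    using dens assms by (intro integrable_on_subinterval[of _ "{xi..}"]) (auto simp: has_integral_integrable)
  have fa: "f absolutely_integrable_on {a..b}"
    using fi assms pos by (intro nonnegative_absolutely_integrable_1) (auto intro: less_imp_le)
  have "(\<lambda>v. exp v * f v) absolutely_integrable_on {a..b}"
  proof (rule absolutely_integrable_bounded_measurable_product_real[OF _ _ _ fa])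
    show "exp \<in> borel_measurable (lebesgue_on {a..b})"
      by (intro continuous_imp_measurable_on_sets_lebesgue continuous_intros) auto
    show "{a..b} \<in> sets lebesgue" by simp
    show "bounded (exp ` {a..b})"
      by (intro compact_imp_bounded compact_continuous_image continuous_intros) auto
  qed
  then show ?thesis by (simp add: g_def[abs_def])
qed

lemma g_int: "xi \<le> a \<Longrightarrow> g integrable_on {a..b}"
  using g_absint absolutely_integrable_on_def by blast

lemma int_pos: assumes "xi \<le> a" "a < b" shows "integral {a..b} g > 0"
proof -
  have ai: "g absolutely_integrable_on {a..b}" using g_absint assms by simp
  hence I: "integrable (lebesgue_on {a..b}) g"
    by (simp add: integrable_restrict_space set_integrable_def) 
  have eq: "integral\<^sup>L (lebesgue_on {a..b}) g = integral {a..b} g"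
    using I by (intro lebesgue_integral_eq_integral) auto
  have nn: "AE x in lebesgue_on {a..b}. 0 \<le> g x"
    using g_pos assms by (intro AE_I2) (auto simp: less_imp_le)
  have ge: "integral {a..b} g \<ge> 0"
    using g_pos assms g_int by (intro integral_nonneg) (auto simp: less_imp_le)
  have "integral {a..b} g \<noteq> 0"
  proof
    assume "integral {a..b} g = 0"
    hence "AE x in lebesgue_on {a..b}. g x = 0"
      using integral_nonneg_eq_0_iff_AE[OF I nn] eq by simp
    moreover have "AE x in lebesgue_on {a..b}. g x \<noteq> 0"
    proof (intro AE_I2)
      fix x assume "x \<in> space (lebesgue_on {a..b})"
      hence "xi \<le> x" using assms by simp
      thus "g x \<noteq> 0" using g_pos[of x] by simp
    qed
    ultimately have "AE x in lebesgue_on {a..b}. False" by eventually_elim auto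
    hence "{x \<in> space (lebesgue_on {a..b}). \<not> False} \<in> null_sets (lebesgue_on {a..b})"
      by (subst AE_iff_null[symmetric]) (rule sets.sets_Collect_const, simp)
    hence "emeasure (lebesgue_on {a..b}) (space (lebesgue_on {a..b})) = 0"
      by (metis (no_types, lifting) Collect_cong Collect_mem_eq null_setsD1)
    thus False using assms by (simp add: emeasure_restrict_space)
  qed
  thus ?thesis using ge by simp
qed

lemma F_xi: "F xi = 0"
  by (simp add: F_def)

lemma F_split: assumes "xi \<le> a" "a \<le> b" shows "F b = F a + integral {a..b} g"
  unfolding F_def using Henstock_Kurzweil_Integration.integral_combine[where a=xi and c=a and b=b and f=g] g_int[of xi b] assms by simp

lemma F_less: assumes "xi \<le> a" "a < b" shows "F a < F b"
  using F_split[of a b] int_pos[of a b] assms by simp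

lemma F_nonneg: assumes "xi \<le> x" shows "F x \<ge> 0"
  using F_less[of xi x] F_xi assms by (cases "x = xi") auto

lemma F_le_iff: assumes "xi \<le> a" "xi \<le> b" shows "F a \<le> F b \<longleftrightarrow> a \<le> b"
proof (cases "a \<le> b")
  case True
  then show ?thesis using F_less[of a b] assms by (cases "a = b") auto
next
  case False
  then show ?thesis using F_less[of b a] assms by auto
qed

lemma F_cont: "continuous_on {xi..b} F"
  unfolding F_def[abs_def] by (rule indefinite_integral_continuous_1) (rule g_int, simp)

lemma up_u_eq: "up_u xi f x = - F x"
proof -
  have "g = (\<lambda>v. exp v * f v)" by (rule ext) (simp add: g_def)
  thus ?thesis by (simp add: up_u_def F_def)
qed

lemma inj: "inj_on (up_u xi f) {xi..}"
proof (rule inj_onI)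
  fix x y assume xy: "x \<in> {xi..}" "y \<in> {xi..}" "up_u xi f x = up_u xi f y"
  hence "F x = F y" by (simp add: up_u_eq)
  thus "x = y" using F_le_iff[of x y] F_le_iff[of y x] xy by auto
qed

lemma up2_F: assumes "xi \<le> x" shows "up2 xi f (- F x) = exp (- x)"
proof -
  have "- F x = up_u xi f x" by (simp add: up_u_eq)
  moreover have "the_inv_into {xi..} (up_u xi f) (up_u xi f x) = x"
    using the_inv_into_f_f[OF inj] assms by simp
  ultimately show ?thesis using assms by (simp add: up2_def)
qed

lemma up2_cases: assumes "up2 xi f u \<noteq> 0" shows "\<exists>x\<ge>xi. u = - F x \<and> up2 xi f u = exp (- x)"
proof -
  from assms have "u \<in> up_u xi f ` {xi..}" by (auto simp: up2_def split: if_splits)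
  then obtain x where "x \<ge> xi" "u = - F x" by (auto simp: up_u_eq)
  thus ?thesis using up2_F by auto
qed

lemma up2_nonneg: "up2 xi f u \<ge> 0"
  using up2_cases[of u] by (cases "up2 xi f u = 0") auto

lemma up2_le: "up2 xi f u \<le> exp (- xi)"
  using up2_cases[of u] by (cases "up2 xi f u = 0") auto

lemma up2_pos_zero: assumes "u > 0" shows "up2 xi f u = 0"
proof (rule ccontr)
  assume "up2 xi f u \<noteq> 0"
  then obtain x where "x \<ge> xi" "u = - F x" using up2_cases by blast
  thus False using F_nonneg[of x] assms by simp
qed

lemma surj:
  assumes unb: "\<forall>M. \<exists>x\<ge>xi. M \<le> F x" and u: "u \<le> 0"
  shows "\<exists>x\<ge>xi. u = - F x"
proof -
  obtain b where b: "b \<ge> xi" "- u \<le> F b" using unb by blast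
  have "\<exists>x\<ge>xi. x \<le> b \<and> F x = - u"
    using IVT'[of F xi "-u" b] F_cont[of b] F_xi b u by auto
  thus ?thesis by force
qed

lemma unbounded_support:
  assumes unb: "\<forall>M. \<exists>x\<ge>xi. M \<le> F x"
  shows "\<not> bounded {u. up2 xi f u \<noteq> 0}"
proof
  assume "bounded {u. up2 xi f u \<noteq> 0}"
  then obtain B where B: "\<And>u. up2 xi f u \<noteq> 0 \<Longrightarrow> \<bar>u\<bar> \<le> B" by (auto simp: bounded_real)
  have "- (\<bar>B\<bar> + 1) \<le> 0" by simp
  then obtain x where x: "x \<ge> xi" "- (\<bar>B\<bar> + 1) = - F x" using surj[OF unb] by blast
  have "up2 xi f (- F x) \<noteq> 0" using up2_F[OF x(1)] by simp
  hence "\<bar>- F x\<bar> \<le> B" by (rule B)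
  thus False using x by simp
qed

lemma unb_from_lower:
  assumes "c > 0" "\<And>v. v \<ge> A \<Longrightarrow> g v \<ge> c"
  shows "\<forall>M. \<exists>x\<ge>xi. M \<le> F x"
proof
  fix M
  define A' where "A' = max A xi"
  define x where "x = A' + \<bar>M\<bar> / c + 1"
  have x: "x \<ge> A'" using assms by (simp add: x_def)
  have "integral {A'..x} (\<lambda>_. c) \<le> integral {A'..x} g"
    using assms g_int[of A' x] by (intro integral_le) (auto simp: A'_def)
  hence "c * (x - A') \<le> integral {A'..x} g" using x by (simp add: mult.commute)
  moreover have "F x = F A' + integral {A'..x} g" using F_split[of A' x] x by (simp add: A'_def)
  moreover have "F A' \<ge> 0" by (rule F_nonneg) (simp add: A'_def)
  moreover have "c * (x - A') = \<bar>M\<bar> + c" using assms by (simp add: x_def field_simps)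
  ultimately have "M \<le> F x" using abs_ge_self[of M] \<open>c > 0\<close> by linarith
  thus "\<exists>x\<ge>xi. M \<le> F x" using x by (intro exI[of _ x]) (auto simp: A'_def)
qed

lemma F_equiv:
  fixes \<phi> \<Phi> :: "real \<Rightarrow> real"
  assumes fe: "\<And>\<epsilon>. \<epsilon> > 0 \<Longrightarrow> eventually (\<lambda>v. \<bar>g v - \<phi> v\<bar> \<le> \<epsilon> * \<phi> v) at_top"
    and \<Phi>d: "\<And>a b. a \<le> b \<Longrightarrow> (\<phi> has_integral (\<Phi> b - \<Phi> a)) {a..b}"
    and \<phi>pos: "\<And>v. \<phi> v > 0"
    and \<Phi>top: "filterlim \<Phi> at_top at_top"
  shows "F \<sim>[at_top] \<Phi>"
proof (rule asymp_equivI', rule tendstoI)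
  fix e :: real assume e: "e > 0"
  define \<epsilon> where "\<epsilon> = e / 3"
  have \<epsilon>: "\<epsilon> > 0" using e by (simp add: \<epsilon>_def)
  obtain A where A: "\<And>v. v \<ge> A \<Longrightarrow> \<bar>g v - \<phi> v\<bar> \<le> \<epsilon> * \<phi> v"
    using fe[OF \<epsilon>] by (auto simp: eventually_at_top_linorder)
  define A' where "A' = max A xi"
  define K where "K = \<bar>F A' - \<Phi> A'\<bar> + \<epsilon> * \<bar>\<Phi> A'\<bar>"
  have bound: "\<bar>F x - \<Phi> x\<bar> \<le> K + \<epsilon> * \<Phi> x" if x: "x \<ge> A'" for x
  proof -
    have gi: "g integrable_on {A'..x}" by (rule g_int) (simp add: A'_def)
    have pi: "(\<phi> has_integral (\<Phi> x - \<Phi> A')) {A'..x}" using \<Phi>d x by simp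
    have "((\<lambda>v. g v - \<phi> v) has_integral (integral {A'..x} g - (\<Phi> x - \<Phi> A'))) {A'..x}"
      using gi pi by (intro has_integral_diff) auto
    hence i1: "integral {A'..x} (\<lambda>v. g v - \<phi> v) = integral {A'..x} g - (\<Phi> x - \<Phi> A')"
      by (rule integral_unique)
    have pi2: "((\<lambda>v. \<epsilon> * \<phi> v) has_integral (\<epsilon> * (\<Phi> x - \<Phi> A'))) {A'..x}"
      using pi by (rule has_integral_mult_right)
    have "norm (integral {A'..x} (\<lambda>v. g v - \<phi> v)) \<le> integral {A'..x} (\<lambda>v. \<epsilon> * \<phi> v)"
    proof (rule integral_norm_bound_integral)
      show "(\<lambda>v. g v - \<phi> v) integrable_on {A'..x}" using gi pi by (intro integrable_diff) auto
      show "(\<lambda>v. \<epsilon> * \<phi> v) integrable_on {A'..x}" using pi2 by auto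
      show "norm (g v - \<phi> v) \<le> \<epsilon> * \<phi> v" if "v \<in> {A'..x}" for v
        using A[of v] that by (auto simp: A'_def)
    qed
    hence "\<bar>integral {A'..x} g - (\<Phi> x - \<Phi> A')\<bar> \<le> \<epsilon> * (\<Phi> x - \<Phi> A')"
      using i1 integral_unique[OF pi2] integral_unique[OF pi] by simp
    moreover have "F x = F A' + integral {A'..x} g" using F_split[of A' x] x by (simp add: A'_def)
    ultimately show ?thesis unfolding K_def using \<epsilon>
      by (smt (verit, best) abs_ge_self abs_minus_cancel mult_left_mono right_diff_distrib)
  qed
  have ev: "eventually (\<lambda>x. \<Phi> x \<ge> K / \<epsilon> + 1 \<and> x \<ge> A') at_top"
    using \<Phi>top by (intro eventually_conj) (auto simp: filterlim_at_top eventually_ge_at_top)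
  show "eventually (\<lambda>x. dist (F x / \<Phi> x) 1 < e) at_top"
    using ev
  proof eventually_elim
    case (elim x)
    have K0: "K \<ge> 0" using \<epsilon> by (simp add: K_def)
    have P: "\<Phi> x > 0" using elim K0 \<epsilon> by (smt (verit) divide_nonneg_pos)
    have "K \<le> \<epsilon> * \<Phi> x" using elim \<epsilon> by (simp add: field_simps)
    hence "\<bar>F x - \<Phi> x\<bar> \<le> 2 * \<epsilon> * \<Phi> x" using bound[of x] elim by simp
    hence d: "\<bar>F x - \<Phi> x\<bar> / \<Phi> x \<le> 2 * \<epsilon>" using P by (simp add: pos_divide_le_eq)
    have "F x / \<Phi> x - 1 = (F x - \<Phi> x) / \<Phi> x" using P by (simp add: diff_divide_distrib)
    hence "\<bar>F x / \<Phi> x - 1\<bar> = \<bar>F x - \<Phi> x\<bar> / \<Phi> x" using P by simp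
    hence "\<bar>F x / \<Phi> x - 1\<bar> \<le> 2 * \<epsilon>" using d by simp
    thus ?case using e by (simp add: dist_real_def \<epsilon>_def)
  qed
qed

definition X :: "real \<Rightarrow> real" where "X u = the_inv_into {xi..} (up_u xi f) u"

lemma X_props:
  assumes unb: "\<forall>M. \<exists>x\<ge>xi. M \<le> F x" and u: "u \<le> 0"
  shows "X u \<ge> xi" "F (X u) = - u" "up2 xi f u = exp (- X u)"
proof -
  obtain x where x: "x \<ge> xi" "u = - F x" using surj[OF unb u] by blast
  have "X u = x" unfolding X_def using the_inv_into_f_f[OF inj, of x] x by (simp add: up_u_eq)
  thus "X u \<ge> xi" "F (X u) = - u" "up2 xi f u = exp (- X u)" using x up2_F by auto
qed

lemma X_lim:
  assumes unb: "\<forall>M. \<exists>x\<ge>xi. M \<le> F x"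
  shows "filterlim X at_top at_bot"
  unfolding filterlim_at_top
proof
  fix Z :: real
  define Z' where "Z' = max Z xi"
  have "eventually (\<lambda>u. u \<le> - F Z') at_bot" by (simp add: eventually_le_at_bot)
  thus "eventually (\<lambda>u. Z \<le> X u) at_bot"
  proof eventually_elim
    case (elim u)
    have F0: "F Z' \<ge> 0" by (rule F_nonneg) (simp add: Z'_def)
    hence u: "u \<le> 0" using elim by simp
    have "F Z' \<le> F (X u)" using X_props[OF unb u] elim by simp
    hence "Z' \<le> X u" using F_le_iff[of Z' "X u"] X_props[OF unb u] by (simp add: Z'_def)
    thus ?case by (simp add: Z'_def)
  qed
qed

lemma case1:
  assumes C: "C1 > 0" and asym: "f \<sim>[at_top] (\<lambda>x. C1 * exp (- x))"
  shows "\<forall>M. \<exists>x\<ge>xi. M \<le> F x"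
    and "\<exists>a>0. up2 xi f \<in> O[at_bot](\<lambda>u. exp (- a * \<bar>u\<bar>))"
    and "\<forall>p>0. sigma p (up2 xi f) < \<infinity>"
proof -
  obtain A where A: "\<And>v. v \<ge> A \<Longrightarrow> \<bar>f v - C1 * exp (- v)\<bar> \<le> 1/2 * (C1 * exp (- v))"
    using asym_eps[OF asym, of "1/2"] C by (auto simp: eventually_at_top_linorder)
  define A' where "A' = max A xi"
  have gb: "C1 / 2 \<le> g v \<and> g v \<le> 2 * C1" if v: "v \<ge> A'" for v
  proof -
    have eq: "exp v * (C1 * exp (- v)) = C1" by (simp add: exp_minus field_simps)
    have "g v - C1 = exp v * (f v - C1 * exp (- v))" using eq by (simp add: g_def algebra_simps)
    hence "\<bar>g v - C1\<bar> = exp v * \<bar>f v - C1 * exp (- v)\<bar>" by (simp add: abs_mult)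
    also have "\<dots> \<le> exp v * (1/2 * (C1 * exp (- v)))" using A[of v] v
      by (intro mult_left_mono) (auto simp: A'_def)
    also have "\<dots> = C1 / 2" using eq by simp
    finally show ?thesis using C by linarith
  qed
  show unb: "\<forall>M. \<exists>x\<ge>xi. M \<le> F x"
    by (rule unb_from_lower[of "C1/2" A']) (use C gb in auto)
  define M where "M = F A'"
  define b where "b = 2 * C1"
  have b: "b > 0" using C by (simp add: b_def)
  have Fup: "F x \<le> M + b * (x - xi)" if x: "x \<ge> xi" for x
  proof (cases "x \<ge> A'")
    case True
    have "integral {A'..x} g \<le> integral {A'..x} (\<lambda>_. 2 * C1)"
      using gb g_int[of A' x] by (intro integral_le) (auto simp: A'_def)
    hence "integral {A'..x} g \<le> 2 * C1 * (x - A')" using True by (simp add: algebra_simps)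
    moreover have "F x = F A' + integral {A'..x} g" using F_split[of A' x] True by (simp add: A'_def)
    moreover have "x - A' \<le> x - xi" by (simp add: A'_def)
    ultimately show ?thesis using C unfolding M_def b_def
      by (smt (verit, best) mult_left_mono)
  next
    case False
    hence "F x \<le> F A'" using F_le_iff[of x A'] x by (simp add: A'_def)
    moreover have "b * (x - xi) \<ge> 0" using b x by simp
    ultimately show ?thesis by (simp add: M_def)
  qed
  define a where "a = 1 / b"
  have a: "a > 0" using b by (simp add: a_def)
  define c where "c = exp (- xi + M / b)"
  have hb: "up2 xi f u \<le> c * exp (- a * \<bar>u\<bar>)" for u
  proof (cases "up2 xi f u = 0")
    case True thus ?thesis by (simp add: c_def)
  next
    case False
    then obtain x where x: "x \<ge> xi" "u = - F x" "up2 xi f u = exp (- x)" using up2_cases by blast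
    have "\<bar>u\<bar> = F x" using x F_nonneg[of x] by simp
    hence "\<bar>u\<bar> \<le> M + b * (x - xi)" using Fup[OF x(1)] by simp
    hence "\<bar>u\<bar> / b \<le> M / b + (x - xi)" using b by (simp add: field_simps)
    hence "- x \<le> - xi + M / b + - a * \<bar>u\<bar>" by (simp add: a_def)
    hence e1: "exp (- x) \<le> exp (- xi + M / b + - a * \<bar>u\<bar>)" by (simp only: exp_le_cancel_iff)
    have e2: "exp (- xi + M / b + - a * \<bar>u\<bar>) = c * exp (- a * \<bar>u\<bar>)"
      unfolding c_def by (simp only: exp_add)
    show ?thesis unfolding x(3) using e1 e2 by (rule ord_le_eq_trans)
  qed
  show "\<exists>a>0. up2 xi f \<in> O[at_bot](\<lambda>u. exp (- a * \<bar>u\<bar>))"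
  proof (intro exI conjI)
    show "up2 xi f \<in> O[at_bot](\<lambda>u. exp (- a * \<bar>u\<bar>))"
      by (intro bigoI[where c = c] always_eventually allI) (use hb up2_nonneg in simp)
  qed (rule a)
  show "\<forall>p>0. sigma p (up2 xi f) < \<infinity>"
  proof (intro allI impI sigma_finite)
    fix p :: real assume p: "p > 0"
    obtain R0 where R0: "\<And>t. t \<ge> R0 \<Longrightarrow> t powr (p + 2) * exp (- a * t) \<le> 1"
      using ev_exp_poly[OF a p] by (auto simp: eventually_at_top_linorder)
    define R where "R = max R0 1"
    show "(\<integral>\<^sup>+u. ennreal (\<bar>u\<bar> powr p * up2 xi f u) \<partial>lborel) < \<infinity>"
    proof (rule moment_finite[where B = "exp (- xi)" and R = R and q = 2 and K = c])
      fix u :: real assume u: "u \<le> - R"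
      define t where "t = - u"
      have t: "t \<ge> 1" "t \<ge> R0" "\<bar>u\<bar> = t" using u by (auto simp: t_def R_def)
      have "\<bar>u\<bar> powr p * up2 xi f u \<le> t powr p * (c * exp (- a * t))"
        using hb[of u] t(3) by (simp add: mult_left_mono)
      also have "t powr p = t powr (p + 2) * t powr (- 2)"
        using t by (simp flip: powr_add)
      also have "t powr (p + 2) * t powr (- 2) * (c * exp (- a * t)) = c * (t powr (p + 2) * exp (- a * t)) * t powr (- 2)"
        by simp
      also have "\<dots> \<le> c * 1 * t powr (- 2)"
        using R0[OF t(2)] by (intro mult_right_mono mult_left_mono) (auto simp: c_def)
      finally show "\<bar>u\<bar> powr p * up2 xi f u \<le> c * (- u) powr (- 2)" by (simp add: t_def)
    qed (use p up2_nonneg up2_pos_zero up2_le in \<open>auto simp: R_def c_def\<close>)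
  qed
qed

lemma case2:
  assumes C: "C2 > 0" and xi01: "0 < \<xi>" "\<xi> < 1"
    and asym: "f \<sim>[at_top] (\<lambda>x. C2 * exp (- \<xi> * x))"
  shows "\<forall>M. \<exists>x\<ge>xi. M \<le> F x"
    and "\<exists>c>0. \<exists>k. up2 xi f \<sim>[at_bot] (\<lambda>u. c * ((1 - \<xi>) * \<bar>u\<bar> + k) powr (1 / (\<xi> - 1)))"
    and "\<forall>p. 0 < p \<and> p < \<xi> / (1 - \<xi>) \<longrightarrow> sigma p (up2 xi f) < \<infinity>"
proof -
  define s where "s = 1 - \<xi>"
  define e where "e = 1 / (\<xi> - 1)"
  have s: "s > 0" using xi01 by (simp add: s_def)
  have e: "e < 0" using xi01 by (simp add: e_def)
  have se: "s * e = -1" using xi01 by (simp add: s_def e_def field_simps)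
  define \<phi> where "\<phi> v = C2 * exp (s * v)" for v
  define \<Phi> where "\<Phi> v = C2 / s * exp (s * v)" for v
  have \<phi>pos: "\<phi> v > 0" for v using C by (simp add: \<phi>_def)
  have fe: "eventually (\<lambda>v. \<bar>g v - \<phi> v\<bar> \<le> \<epsilon> * \<phi> v) at_top" if \<epsilon>: "\<epsilon> > 0" for \<epsilon>
  proof -
    have "eventually (\<lambda>v. \<bar>f v - C2 * exp (- \<xi> * v)\<bar> \<le> \<epsilon> * (C2 * exp (- \<xi> * v))) at_top"
      using C by (intro asym_eps[OF asym _ \<epsilon>]) auto
    thus ?thesis
    proof eventually_elim
      case (elim v)
      have eq: "exp v * (C2 * exp (- \<xi> * v)) = \<phi> v"
        by (simp add: \<phi>_def s_def mult.left_commute flip: exp_add) (simp add: algebra_simps)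
      have "g v - \<phi> v = exp v * (f v - C2 * exp (- \<xi> * v))" using eq by (simp add: g_def algebra_simps)
      hence "\<bar>g v - \<phi> v\<bar> = exp v * \<bar>f v - C2 * exp (- \<xi> * v)\<bar>" by (simp add: abs_mult)
      also have "\<dots> \<le> exp v * (\<epsilon> * (C2 * exp (- \<xi> * v)))" using elim by (intro mult_left_mono) auto
      also have "\<dots> = \<epsilon> * \<phi> v" using eq by (simp add: algebra_simps)
      finally show ?case .
    qed
  qed
  have \<Phi>d: "(\<phi> has_integral (\<Phi> b - \<Phi> a)) {a..b}" if "a \<le> b" for a b
    using exp_has_integral[of s a b C2] s that unfolding \<phi>_def[abs_def] \<Phi>_def by simp
  have \<Phi>top: "filterlim \<Phi> at_top at_top"
    unfolding \<Phi>_def[abs_def] using s C by real_asymp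
  have Feq: "F \<sim>[at_top] \<Phi>" by (rule F_equiv[OF fe \<Phi>d \<phi>pos \<Phi>top])
  obtain A where A: "\<And>v. v \<ge> A \<Longrightarrow> \<bar>g v - \<phi> v\<bar> \<le> 1/2 * \<phi> v"
    using fe[of "1/2"] by (auto simp: eventually_at_top_linorder)
  define A' where "A' = max A xi"
  show unb: "\<forall>M. \<exists>x\<ge>xi. M \<le> F x"
  proof (rule unb_from_lower[of "C2/2" "max A' 0"])
    fix v assume v: "max A' 0 \<le> v"
    have "exp (s * v) \<ge> 1" using v s by simp
    hence "C2 / 2 \<le> \<phi> v / 2" using C by (simp add: \<phi>_def)
    also have "\<dots> \<le> g v"
    proof -
      have "\<bar>g v - \<phi> v\<bar> \<le> 1/2 * \<phi> v" using A[of v] v by (auto simp: A'_def)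
      thus ?thesis by linarith
    qed
    finally show "C2 / 2 \<le> g v" .
  qed (use C in simp)
  define M where "M = F A'"
  define b where "b = 2 * C2 / s"
  have b: "b > 0" using C s by (simp add: b_def)
  have M0: "M \<ge> 0" unfolding M_def by (rule F_nonneg) (simp add: A'_def)
  have Fup: "F x \<le> M + b * exp (s * x)" if x: "x \<ge> xi" for x
  proof (cases "x \<ge> A'")
    case True
    have hi: "((\<lambda>v. (2 * C2) * exp (s * v)) has_integral (2 * C2 / s * exp (s * x) - 2 * C2 / s * exp (s * A'))) {A'..x}"
      using exp_has_integral[of s A' x "2 * C2"] s True by simp
    have "integral {A'..x} g \<le> integral {A'..x} (\<lambda>v. (2 * C2) * exp (s * v))"
    proof (rule integral_le)
      show "g integrable_on {A'..x}" by (rule g_int) (simp add: A'_def)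
      show "(\<lambda>v. (2 * C2) * exp (s * v)) integrable_on {A'..x}" using hi by auto
      fix v assume "v \<in> {A'..x}"
      hence "\<bar>g v - \<phi> v\<bar> \<le> 1/2 * \<phi> v" using A[of v] by (auto simp: A'_def)
      moreover have "\<phi> v > 0" by (rule \<phi>pos)
      ultimately show "g v \<le> (2 * C2) * exp (s * v)" unfolding \<phi>_def by linarith
    qed
    also have "\<dots> = b * exp (s * x) - b * exp (s * A')" using integral_unique[OF hi] by (simp add: b_def)
    also have "\<dots> \<le> b * exp (s * x)" using b by simp
    finally have "integral {A'..x} g \<le> b * exp (s * x)" .
    moreover have "F x = F A' + integral {A'..x} g" using F_split[of A' x] True by (simp add: A'_def)
    ultimately show ?thesis by (simp add: M_def)
  next
    case False
    hence "F x \<le> F A'" using F_le_iff[of x A'] x by (simp add: A'_def)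
    moreover have "b * exp (s * x) \<ge> 0" using b by simp
    ultimately show ?thesis by (simp add: M_def)
  qed
  show "\<forall>p. 0 < p \<and> p < \<xi> / (1 - \<xi>) \<longrightarrow> sigma p (up2 xi f) < \<infinity>"
  proof (intro allI impI sigma_finite)
    fix p :: real assume p: "0 < p \<and> p < \<xi> / (1 - \<xi>)"
    define q where "q = - (p + e)"
    have q: "q > 1"
    proof -
      have "\<xi> / (1 - \<xi>) = - 1 - e" using xi01 by (simp add: e_def field_simps)
      thus ?thesis using p by (simp add: q_def)
    qed
    define R where "R = 2 * M + 1"
    define K where "K = (2 * b) powr (- e)"
    show "(\<integral>\<^sup>+u. ennreal (\<bar>u\<bar> powr p * up2 xi f u) \<partial>lborel) < \<infinity>"
    proof (rule moment_finite[where B = "exp (- xi)" and R = R and q = q and K = K])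
      fix u :: real assume u: "u \<le> - R"
      show "\<bar>u\<bar> powr p * up2 xi f u \<le> K * (- u) powr (- q)"
      proof (cases "up2 xi f u = 0")
        case True thus ?thesis by (simp add: K_def)
      next
        case False
        then obtain x where x: "x \<ge> xi" "u = - F x" "up2 xi f u = exp (- x)" using up2_cases by blast
        define t where "t = - u"
        have t: "t \<ge> 2 * M + 1" "\<bar>u\<bar> = t" "t = F x" using u x M0 by (auto simp: t_def R_def)
        have tpos: "t > 0" using t M0 by simp
        have "t \<le> M + b * exp (s * x)" using Fup[OF x(1)] t by simp
        hence "t / 2 \<le> b * exp (s * x)" using t M0 by simp
        hence le1: "t / (2 * b) \<le> exp (s * x)" using b by (simp add: field_simps)
        have "s * x * e = - x" using se by (metis mult.commute mult.left_commute mult_minus1)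
        hence "exp (- x) = exp (s * x) powr e" by (simp add: exp_powr_real)
        also have "\<dots> \<le> (t / (2 * b)) powr e"
          using le1 e tpos b by (intro powr_mono2') auto
        also have "\<dots> = t powr e / (2 * b) powr e" using tpos b by (simp add: powr_divide)
        also have "\<dots> = t powr e * K" by (simp add: K_def powr_minus_divide)
        finally have "up2 xi f u \<le> t powr e * K" using x by simp
        hence "\<bar>u\<bar> powr p * up2 xi f u \<le> t powr p * (t powr e * K)"
          using t by (simp add: mult_left_mono)
        also have "\<dots> = K * t powr (- q)" using tpos by (simp add: q_def powr_add)
        finally show ?thesis by (simp add: t_def)
      qed
    qed (use M0 in \<open>simp_all add: up2_nonneg up2_pos_zero up2_le R_def K_def q p\<close>)
  qed
  define c where "c = C2 powr (- e)"
  have cpos: "c > 0" using C by (simp add: c_def)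
  have "(\<lambda>x. s * F x) \<sim>[at_top] (\<lambda>x. s * \<Phi> x)"
    by (intro asymp_equiv_intros Feq)
  also have "(\<lambda>x. s * \<Phi> x) = (\<lambda>x. C2 * exp (s * x))" using s by (simp add: \<Phi>_def)
  finally have E1: "(\<lambda>x. s * F x) \<sim>[at_top] (\<lambda>x. C2 * exp (s * x))" .
  have "(\<lambda>x. (s * F x) powr e) \<sim>[at_top] (\<lambda>x. (C2 * exp (s * x)) powr e)"
  proof (rule asymp_equiv_powr_real[OF E1])
    show "eventually (\<lambda>x. s * F x \<ge> 0) at_top"
      using eventually_ge_at_top[of xi] by eventually_elim (use s F_nonneg in simp)
  qed (use C in simp)
  hence "(\<lambda>x. c * (s * F x) powr e) \<sim>[at_top] (\<lambda>x. c * (C2 * exp (s * x)) powr e)"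
    by (rule asymp_equiv_mult[OF asymp_equiv_refl])
  also have "(\<lambda>x. c * (C2 * exp (s * x)) powr e) = (\<lambda>x. exp (- x))"
  proof
    fix x
    have "c * (C2 * exp (s * x)) powr e = (C2 powr (- e) * C2 powr e) * exp (s * x * e)"
      using C by (simp add: c_def powr_mult exp_powr_real)
    also have "C2 powr (- e) * C2 powr e = 1" using C by (simp flip: powr_add)
    also have "s * x * e = - x" using se by (metis mult.commute mult.left_commute mult_minus1)
    finally show "c * (C2 * exp (s * x)) powr e = exp (- x)" by simp
  qed
  finally have E2: "(\<lambda>x. c * (s * F x) powr e) \<sim>[at_top] (\<lambda>x. exp (- x))" .
  have E3: "(\<lambda>u. exp (- X u)) \<sim>[at_bot] (\<lambda>u. c * (s * F (X u)) powr e)"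
    using asymp_equiv_compose'[OF asymp_equiv_symI[OF E2] X_lim[OF unb]] .
  have "up2 xi f \<sim>[at_bot] (\<lambda>u. c * ((1 - \<xi>) * \<bar>u\<bar> + 0) powr (1 / (\<xi> - 1)))"
  proof (subst asymp_equiv_cong)
    show "eventually (\<lambda>u. up2 xi f u = exp (- X u)) at_bot"
      using eventually_le_at_bot[of 0] by eventually_elim (use X_props[OF unb] in simp)
    show "eventually (\<lambda>u. c * ((1 - \<xi>) * \<bar>u\<bar> + 0) powr (1 / (\<xi> - 1)) = c * (s * F (X u)) powr e) at_bot"
      using eventually_le_at_bot[of 0] by eventually_elim (use X_props[OF unb] in \<open>simp add: s_def e_def\<close>)
  qed (rule E3)
  thus "\<exists>c>0. \<exists>k. up2 xi f \<sim>[at_bot] (\<lambda>u. c * ((1 - \<xi>) * \<bar>u\<bar> + k) powr (1 / (\<xi> - 1)))"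
    using cpos by blast
qed

lemma case3:
  assumes C: "C3 > 0" and eta: "\<eta> > 1"
    and asym: "f \<sim>[at_top] (\<lambda>x. C3 * x powr (- \<eta>))"
  shows "\<forall>M. \<exists>x\<ge>xi. M \<le> F x"
    and "\<forall>p>0. sigma p (up2 xi f) = \<infinity>"
proof -
  have "eventually (\<lambda>x. \<bar>f x - C3 * x powr (- \<eta>)\<bar> \<le> 1/2 * (C3 * x powr (- \<eta>))) at_top"
    using C by (intro asym_eps[OF asym]) (auto intro: eventually_mono[OF eventually_gt_at_top[of 0]])
  then obtain A where A: "\<And>v. v \<ge> A \<Longrightarrow> \<bar>f v - C3 * v powr (- \<eta>)\<bar> \<le> 1/2 * (C3 * v powr (- \<eta>))"
    by (auto simp: eventually_at_top_linorder)
  define A' where "A' = max A (max xi 1)"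
  have gl: "C3 / 2 * exp v * v powr (- \<eta>) \<le> g v" if v: "v \<ge> A'" for v
  proof -
    have "\<bar>f v - C3 * v powr (- \<eta>)\<bar> \<le> 1/2 * (C3 * v powr (- \<eta>))" using A[of v] v by (simp add: A'_def)
    hence "C3 / 2 * v powr (- \<eta>) \<le> f v" by linarith
    hence "exp v * (C3 / 2 * v powr (- \<eta>)) \<le> exp v * f v" by (rule mult_left_mono) simp
    thus ?thesis by (simp add: g_def algebra_simps)
  qed
  obtain A2 where A2: "\<And>v. v \<ge> A2 \<Longrightarrow> 1 \<le> C3 / 2 * exp v * v powr (- \<eta>)"
    using ev3a[OF eta C] by (auto simp: eventually_at_top_linorder)
  show unb: "\<forall>M. \<exists>x\<ge>xi. M \<le> F x"
  proof (rule unb_from_lower[of 1 "max A' A2"])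
    fix v assume "max A' A2 \<le> v"
    thus "1 \<le> g v" using A2[of v] gl[of v] by simp
  qed simp
  have Flow: "C3 / 2 * exp (x - 1) * x powr (- \<eta>) \<le> F x" if x: "x \<ge> A' + 1" for x
  proof -
    have x1: "x - 1 \<ge> xi" "x - 1 \<ge> A'" "x - 1 \<ge> 1" using x by (auto simp: A'_def)
    have "integral {x - 1..x} (\<lambda>_. C3 / 2 * exp (x - 1) * x powr (- \<eta>)) \<le> integral {x - 1..x} g"
    proof (rule integral_le)
      show "g integrable_on {x - 1..x}" by (rule g_int) (use x1 in simp)
      fix v assume v: "v \<in> {x - 1..x}"
      have "C3 / 2 * exp (x - 1) * x powr (- \<eta>) \<le> C3 / 2 * exp v * v powr (- \<eta>)"
        using v x1 C eta by (intro mult_mono powr_mono2') auto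
      also have "\<dots> \<le> g v" using gl v x1 by simp
      finally show "C3 / 2 * exp (x - 1) * x powr (- \<eta>) \<le> g v" .
    qed (rule integrable_continuous_interval, rule continuous_on_const)
    hence "C3 / 2 * exp (x - 1) * x powr (- \<eta>) \<le> integral {x - 1..x} g" by simp
    moreover have "F x = F (x - 1) + integral {x - 1..x} g" using F_split[of "x - 1" x] x1 by simp
    moreover have "F (x - 1) \<ge> 0" using F_nonneg x1 by simp
    ultimately show ?thesis by linarith
  qed
  show "\<forall>p>0. sigma p (up2 xi f) = \<infinity>"
  proof (intro allI impI sigma_infinite)
    fix p :: real assume p: "p > 0"
    obtain A3 where A3: "\<And>x. x \<ge> A3 \<Longrightarrow> exp x \<le> (C3 / 2 * exp (x - 1) * x powr (- \<eta>)) powr (p + 1)"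
      using ev3b[OF eta C p] by (auto simp: eventually_at_top_linorder)
    define X0 where "X0 = max (A' + 1) A3"
    have X0: "X0 \<ge> xi" by (simp add: X0_def A'_def)
    have FX: "exp x \<le> F x powr (p + 1)" if x: "x \<ge> X0" for x
    proof -
      have "exp x \<le> (C3 / 2 * exp (x - 1) * x powr (- \<eta>)) powr (p + 1)" using A3 x by (simp add: X0_def)
      also have "\<dots> \<le> F x powr (p + 1)"
        using Flow[of x] x p C by (intro powr_mono2) (auto simp: X0_def)
      finally show ?thesis .
    qed
    define R where "R = max (F X0) 1"
    show "(\<integral>\<^sup>+u. ennreal (\<bar>u\<bar> powr p * up2 xi f u) \<partial>lborel) = \<infinity>"
    proof (rule moment_infinite[where R = R])
      show "R > 0" by (simp add: R_def)
      fix u :: real assume u: "u \<le> - R"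
      hence u0: "u \<le> 0" by (simp add: R_def)
      obtain x where x: "x \<ge> xi" "u = - F x" using surj[OF unb u0] by blast
      have h: "up2 xi f u = exp (- x)" using up2_F[OF x(1)] x by simp
      define t where "t = F x"
      have t: "t \<ge> F X0" "t \<ge> 1" "\<bar>u\<bar> = t" "- u = t" using u x by (auto simp: t_def R_def)
      have "X0 \<le> x" using F_le_iff[OF X0 x(1)] t(1) by (simp add: t_def)
      hence ex: "exp x \<le> t powr p * t" using FX[of x] t by (simp add: t_def powr_add)
      have tp: "t powr p > 0" using t by simp
      have "inverse (t powr p * t) \<le> inverse (exp x)" using ex by (rule le_imp_inverse_le) simp
      hence m1: "t powr p * inverse (t powr p * t) \<le> t powr p * exp (- x)"
        using tp by (intro mult_left_mono) (auto simp: exp_minus)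
      have m2: "t powr p * inverse (t powr p * t) = 1 / t" using tp t by (simp add: field_simps)
      have "1 / t \<le> t powr p * exp (- x)" using m1 unfolding m2 .
      thus "1 / (- u) \<le> \<bar>u\<bar> powr p * up2 xi f u" using h t by simp
    qed
  qed
qed

end


theorem proposition6:
  fixes xi \<xi> \<eta> C1 C2 C3 :: real and f1 f2 f3 :: "real \<Rightarrow> real"
  assumes pos1: "\<And>x. x \<ge> xi \<Longrightarrow> f1 x > 0"
      and pos2: "\<And>x. x \<ge> xi \<Longrightarrow> f2 x > 0"
      and pos3: "\<And>x. x \<ge> xi \<Longrightarrow> f3 x > 0"
      and dens1: "(f1 has_integral 1) {xi..}"
      and dens2: "(f2 has_integral 1) {xi..}"
      and dens3: "(f3 has_integral 1) {xi..}"
      and eta: "\<eta> > 1"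
      and xi01: "0 < \<xi>" "\<xi> < 1"
      and C: "C1 > 0" "C2 > 0" "C3 > 0"
      and asym1: "f1 \<sim>[at_top] (\<lambda>x. C1 * exp (- x))"
      and asym2: "f2 \<sim>[at_top] (\<lambda>x. C2 * exp (- \<xi> * x))"
      and asym3: "f3 \<sim>[at_top] (\<lambda>x. C3 * x powr (- \<eta>))"
  shows "\<not> bounded {u. up2 xi f1 u \<noteq> 0} \<and> \<not> bounded {u. up2 xi f2 u \<noteq> 0}
           \<and> \<not> bounded {u. up2 xi f3 u \<noteq> 0}
       \<and> (\<exists>a>0. up2 xi f1 \<in> O[at_bot](\<lambda>u. exp (- a * \<bar>u\<bar>)))
       \<and> (\<forall>p>0. sigma p (up2 xi f1) < \<infinity>)
       \<and> (\<exists>c>0. \<exists>k. up2 xi f2 \<sim>[at_bot] (\<lambda>u. c * ((1 - \<xi>) * \<bar>u\<bar> + k) powr (1 / (\<xi> - 1))))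
       \<and> (\<forall>p. 0 < p \<and> p < \<xi> / (1 - \<xi>) \<longrightarrow> sigma p (up2 xi f2) < \<infinity>)
       \<and> (\<forall>p>0. sigma p (up2 xi f3) = \<infinity>)"
proof -
  interpret I1: updens xi f1 using pos1 dens1 by unfold_locales
  interpret I2: updens xi f2 using pos2 dens2 by unfold_locales
  interpret I3: updens xi f3 using pos3 dens3 by unfold_locales
  note c1 = I1.case1[OF C(1) asym1]
  note c2 = I2.case2[OF C(2) xi01 asym2]
  note c3 = I3.case3[OF C(3) eta asym3]
  show ?thesis
    using I1.unbounded_support[OF c1(1)] I2.unbounded_support[OF c2(1)]
      I3.unbounded_support[OF c3(1)] c1(2) c1(3) c2(2) c2(3) c3(2) by blast
qed

end
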